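(* Let the potential $v$ be continuous. Then the essential spectrum of the operator $H=\mathcal L+v(x)$ in $L^2(\mathbb R^d)$ contains the segments $[-\alpha,0]$ and $[-1,\max_x v(x)-1]$, where $[-\alpha,0]$ is the closure of the range of the function $\widehat a(k)-1$.
   Context: Consider in $L^2(\mathbb R^d)$ the operator $H=\mathcal L+v(x)$, where $\mathcal L\psi(x)=\int_{\mathbb R^d}(\psi(x+y)-\psi(x))a(y)\,dy$ (the jump intensity is normalized to $1$), with $a(y)=a(-y)$, $a\ge 0$, $\int_{\mathbb R^d}a(y)\,dy=1$, and the potential $v(x)\ge 0$ is compactly supported. Here $\widehat a(k)=\int_{\mathbb R^d}e^{-i(k,y)}a(y)\,dy=\int_{\mathbb R^d}\cos(k,y)\,a(y)\,dy$ is real-valued, satisfies $\widehat a(0)=1$, $|\widehat a(k)|<1$ for $k\neq 0$, $\widehat a(k)\to 0$ as $|k|\to\infty$, and it is assumed that $\widehat a\in L^1(\mathbb R^d)$. After the Fourier transform, $\mathcal L$ acts as multiplication by $\widehat a(k)-1$, and the closure of the range of $\widehat a(k)-1$ is a segment $[-\alpha,0]$ with $1\le\alpha\le 2$. *)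

theory Defs
  imports "HOL-Analysis.Analysis"
begin

text \<open>Functions on R^d (an arbitrary Euclidean space 'a) with complex values;
  L^2 is realised as square-integrable functions, with equalities taken almost everywhere.\<close>

definition L2 :: "('a::euclidean_space \<Rightarrow> complex) \<Rightarrow> bool" where
  "L2 f \<longleftrightarrow> f \<in> borel_measurable lborel \<and> integrable lborel (\<lambda>x. (norm (f x))\<^sup>2)"

definition L2norm :: "('a::euclidean_space \<Rightarrow> complex) \<Rightarrow> real" where
  "L2norm f = sqrt (LINT x|lborel. (norm (f x))\<^sup>2)"

text \<open>Fourier transform of the (even) jump kernel a.\<close>
definition ahat :: "('a::euclidean_space \<Rightarrow> real) \<Rightarrow> 'a \<Rightarrow> real" where
  "ahat a k = (LINT y|lborel. cos (k \<bullet> y) * a y)"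

definition Lop :: "('a::euclidean_space \<Rightarrow> real) \<Rightarrow> ('a \<Rightarrow> complex) \<Rightarrow> 'a \<Rightarrow> complex" where
  "Lop a \<psi> x = (LINT y|lborel. (\<psi> (x + y) - \<psi> x) * complex_of_real (a y))"

definition Hop :: "('a::euclidean_space \<Rightarrow> real) \<Rightarrow> ('a \<Rightarrow> real) \<Rightarrow> ('a \<Rightarrow> complex) \<Rightarrow> 'a \<Rightarrow> complex" where
  "Hop a v \<psi> x = Lop a \<psi> x + complex_of_real (v x) * \<psi> x"

definition in_resolvent :: "(('a::euclidean_space \<Rightarrow> complex) \<Rightarrow> ('a \<Rightarrow> complex)) \<Rightarrow> complex \<Rightarrow> bool" where
  "in_resolvent T lam \<longleftrightarrow> (\<exists>R C. (\<forall>f. L2 f \<longrightarrow> L2 (R f) \<and> L2norm (R f) \<le> C * L2norm f)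
      \<and> (\<forall>f. L2 f \<longrightarrow> (AE x in lborel. R (\<lambda>y. T f y - lam * f y) x = f x))
      \<and> (\<forall>f. L2 f \<longrightarrow> (AE x in lborel. T (R f) x - lam * R f x = f x)))"

definition spectrum_op :: "(('a::euclidean_space \<Rightarrow> complex) \<Rightarrow> ('a \<Rightarrow> complex)) \<Rightarrow> complex set" where
  "spectrum_op T = {lam. \<not> in_resolvent T lam}"

definition eigenfun :: "(('a::euclidean_space \<Rightarrow> complex) \<Rightarrow> ('a \<Rightarrow> complex)) \<Rightarrow> complex \<Rightarrow> ('a \<Rightarrow> complex) \<Rightarrow> bool" where
  "eigenfun T lam f \<longleftrightarrow> L2 f \<and> (AE x in lborel. T f x = lam * f x)"

definition discrete_spectrum :: "(('a::euclidean_space \<Rightarrow> complex) \<Rightarrow> ('a \<Rightarrow> complex)) \<Rightarrow> complex set" where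
  "discrete_spectrum T = {lam \<in> spectrum_op T.
      (\<exists>e>0. \<forall>\<mu> \<in> spectrum_op T. \<mu> \<noteq> lam \<longrightarrow> e \<le> dist \<mu> lam)
    \<and> (\<exists>f. eigenfun T lam f \<and> \<not> (AE x in lborel. f x = 0))
    \<and> (\<exists>B. finite B \<and> (\<forall>b\<in>B. eigenfun T lam b) \<and>
          (\<forall>g. eigenfun T lam g \<longrightarrow> (\<exists>c. AE x in lborel. g x = (\<Sum>b\<in>B. c b * b x))))}"

definition essential_spectrum :: "(('a::euclidean_space \<Rightarrow> complex) \<Rightarrow> ('a \<Rightarrow> complex)) \<Rightarrow> complex set" where
  "essential_spectrum T = spectrum_op T - discrete_spectrum T"

end

theory Submission imports Defs begin

definition N2 :: "('a::euclidean_space \<Rightarrow> complex) \<Rightarrow> real" where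
  "N2 f = (LINT x|lborel. (norm (f x))\<^sup>2)"

definition approx_ev :: "(('a::euclidean_space \<Rightarrow> complex) \<Rightarrow> ('a \<Rightarrow> complex)) \<Rightarrow> complex \<Rightarrow> bool" where
  "approx_ev T lam \<longleftrightarrow> (\<forall>e>0. \<exists>\<psi>. L2 \<psi> \<and> L2 (\<lambda>x. T \<psi> x - lam * \<psi> x) \<and> N2 \<psi> > 0
      \<and> N2 (\<lambda>x. T \<psi> x - lam * \<psi> x) \<le> e * N2 \<psi>)"

lemma N2_nonneg: "N2 f \<ge> 0"
  unfolding N2_def by simp

lemma N2_cong_AE:
  assumes "L2 f" "L2 g" "AE x in lborel. f x = g x"
  shows "N2 f = N2 g"
  unfolding N2_def
proof (rule integral_cong_AE)
  have [measurable]: "f \<in> borel_measurable borel" "g \<in> borel_measurable borel"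
    using assms(1,2) unfolding L2_def by auto
  show "(\<lambda>x. (cmod (f x))\<^sup>2) \<in> borel_measurable lborel" by measurable
  show "(\<lambda>x. (cmod (g x))\<^sup>2) \<in> borel_measurable lborel" by measurable
  show "AE x in lborel. (cmod (f x))\<^sup>2 = (cmod (g x))\<^sup>2" using assms(3) by eventually_elim simp
qed

lemma approx_ev_spectrum:
  assumes "approx_ev T lam"
  shows "lam \<in> spectrum_op T"
proof -
  have False if "in_resolvent T lam"
  proof -
    from that obtain R C where Rb: "\<And>f. L2 f \<Longrightarrow> L2 (R f) \<and> L2norm (R f) \<le> C * L2norm f"
      and Rl: "\<And>f. L2 f \<Longrightarrow> (AE x in lborel. R (\<lambda>y. T f y - lam * f y) x = f x)"
      unfolding in_resolvent_def by blast
    define e where "e = 1 / (2 * (C\<^sup>2 + 1))"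
    have e: "e > 0" unfolding e_def by (smt (verit) zero_le_power2 divide_pos_pos)
    from assms e obtain \<psi> where \<psi>: "L2 \<psi>" "L2 (\<lambda>x. T \<psi> x - lam * \<psi> x)" "N2 \<psi> > 0"
      "N2 (\<lambda>x. T \<psi> x - lam * \<psi> x) \<le> e * N2 \<psi>"
      unfolding approx_ev_def by blast
    define g where "g = (\<lambda>x. T \<psi> x - lam * \<psi> x)"
    have g: "L2 g" "N2 g \<le> e * N2 \<psi>" using \<psi> unfolding g_def by auto
    have "L2 (R g)" and le: "L2norm (R g) \<le> C * L2norm g" using Rb[OF g(1)] by auto
    have "N2 (R g) = N2 \<psi>"
      by (rule N2_cong_AE[OF \<open>L2 (R g)\<close> \<psi>(1)]) (use Rl[OF \<psi>(1)] in \<open>simp add: g_def\<close>)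
    hence "sqrt (N2 \<psi>) \<le> C * sqrt (N2 g)" using le unfolding L2norm_def N2_def by simp
    hence "sqrt (N2 \<psi>) \<le> \<bar>C\<bar> * sqrt (N2 g)"
      using mult_right_mono[OF abs_ge_self[of C] real_sqrt_ge_zero[OF N2_nonneg[of g]]] by linarith
    hence "(sqrt (N2 \<psi>))\<^sup>2 \<le> (\<bar>C\<bar> * sqrt (N2 g))\<^sup>2"
      by (rule power_mono) (auto simp: N2_nonneg)
    hence "N2 \<psi> \<le> C\<^sup>2 * N2 g" using N2_nonneg[of \<psi>] N2_nonneg[of g]
      by (simp add: power_mult_distrib)
    also have "\<dots> \<le> C\<^sup>2 * (e * N2 \<psi>)" using g(2) by (simp add: mult_left_mono)
    also have "\<dots> < N2 \<psi>"
    proof -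
      have "C\<^sup>2 * e < 1" unfolding e_def by (simp add: field_simps add_pos_nonneg)
      hence "(C\<^sup>2 * e) * N2 \<psi> < 1 * N2 \<psi>" using \<psi>(3) by (rule mult_strict_right_mono)
      thus ?thesis by (simp add: mult.assoc)
    qed
    finally show False by simp
  qed
  thus ?thesis unfolding spectrum_op_def by blast
qed


lemma sq_tri: "(cmod (u + c * w))\<^sup>2 \<le> 2 * (cmod u)\<^sup>2 + 2 * (cmod c)\<^sup>2 * (cmod w)\<^sup>2"
proof -
  have "cmod (u + c * w) \<le> cmod u + cmod c * cmod w"
    by (metis norm_mult norm_triangle_ineq)
  hence "(cmod (u + c * w))\<^sup>2 \<le> (cmod u + cmod c * cmod w)\<^sup>2"
    by (rule power_mono) simp
  also have "\<dots> \<le> 2 * (cmod u)\<^sup>2 + 2 * (cmod c)\<^sup>2 * (cmod w)\<^sup>2"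
  proof -
    have "0 \<le> (cmod u - cmod c * cmod w)\<^sup>2" by simp
    thus ?thesis unfolding power2_sum power2_diff power_mult_distrib by linarith
  qed
  finally show ?thesis .
qed

lemma L2_comb:
  assumes f: "L2 f" and g: "L2 g"
  shows "L2 (\<lambda>x. f x + c * g x)"
    and "N2 (\<lambda>x. f x + c * g x) \<le> 2 * N2 f + 2 * (cmod c)\<^sup>2 * N2 g"
proof -
  have [measurable]: "f \<in> borel_measurable borel" "g \<in> borel_measurable borel"
    using f g unfolding L2_def by auto
  have i1: "integrable lborel (\<lambda>x. (cmod (f x))\<^sup>2)" "integrable lborel (\<lambda>x. (cmod (g x))\<^sup>2)"
    using f g unfolding L2_def by auto
  have i2: "integrable lborel (\<lambda>x. 2 * (cmod (f x))\<^sup>2 + 2 * (cmod c)\<^sup>2 * (cmod (g x))\<^sup>2)"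
    using i1 by auto
  have i3: "integrable lborel (\<lambda>x. (cmod (f x + c * g x))\<^sup>2)"
    by (rule Bochner_Integration.integrable_bound[OF i2]) (auto intro!: AE_I2 order.trans[OF sq_tri])
  show "L2 (\<lambda>x. f x + c * g x)" unfolding L2_def using i3 by simp
  have "N2 (\<lambda>x. f x + c * g x) \<le> (LINT x|lborel. 2 * (cmod (f x))\<^sup>2 + 2 * (cmod c)\<^sup>2 * (cmod (g x))\<^sup>2)"
    unfolding N2_def by (rule integral_mono[OF i3 i2 sq_tri])
  also have "\<dots> = 2 * N2 f + 2 * (cmod c)\<^sup>2 * N2 g"
    unfolding N2_def using i1 by simp
  finally show "N2 (\<lambda>x. f x + c * g x) \<le> 2 * N2 f + 2 * (cmod c)\<^sup>2 * N2 g" .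
qed

lemma approx_ev_closed:
  assumes "lam \<in> closure {\<mu>. approx_ev T \<mu>}"
  shows "approx_ev T lam"
  unfolding approx_ev_def
proof (intro allI impI)
  fix e :: real assume e: "e > 0"
  obtain \<mu> where \<mu>: "approx_ev T \<mu>" "dist \<mu> lam < sqrt (e/4)"
  proof -
    have "sqrt (e/4) > 0" using e by simp
    with assms show ?thesis unfolding closure_approachable using that by blast
  qed
  from \<mu>(1) e obtain \<psi> where \<psi>: "L2 \<psi>" "L2 (\<lambda>x. T \<psi> x - \<mu> * \<psi> x)" "N2 \<psi> > 0"
      "N2 (\<lambda>x. T \<psi> x - \<mu> * \<psi> x) \<le> (e/4) * N2 \<psi>"
    unfolding approx_ev_def by (meson divide_pos_pos zero_less_numeral)
  have eq: "(\<lambda>x. T \<psi> x - lam * \<psi> x) = (\<lambda>x. (T \<psi> x - \<mu> * \<psi> x) + (\<mu> - lam) * \<psi> x)"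
    by (auto simp: algebra_simps)
  have c: "(cmod (\<mu> - lam))\<^sup>2 \<le> e/4"
  proof -
    have "cmod (\<mu> - lam) \<le> sqrt (e/4)" using \<mu>(2) by (simp add: dist_norm)
    hence "(cmod (\<mu> - lam))\<^sup>2 \<le> (sqrt (e/4))\<^sup>2" by (rule power_mono) simp
    thus ?thesis using e by simp
  qed
  have "N2 (\<lambda>x. T \<psi> x - lam * \<psi> x) \<le> 2 * (e/4 * N2 \<psi>) + 2 * (e/4) * N2 \<psi>"
    unfolding eq using L2_comb(2)[OF \<psi>(2) \<psi>(1), of "\<mu> - lam"] \<psi>(4) c
      mult_right_mono[OF c N2_nonneg[of \<psi>]] by linarith
  also have "\<dots> = e * N2 \<psi>" by simp
  finally show "\<exists>\<psi>. L2 \<psi> \<and> L2 (\<lambda>x. T \<psi> x - lam * \<psi> x) \<and> 0 < N2 \<psi> \<and> N2 (\<lambda>x. T \<psi> x - lam * \<psi> x) \<le> e * N2 \<psi>"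
    using \<psi>(1,3) L2_comb(1)[OF \<psi>(2) \<psi>(1), of "\<mu> - lam"] eq by auto
qed


lemma tonelli_bound:
  fixes F :: "'a::euclidean_space \<Rightarrow> 'a \<Rightarrow> real" and w b :: "'a \<Rightarrow> real"
  assumes Fm[measurable]: "case_prod F \<in> borel_measurable (lborel \<Otimes>\<^sub>M lborel)"
    and F01: "\<And>x y. 0 \<le> F x y \<and> F x y \<le> 1"
    and wm[measurable]: "w \<in> borel_measurable lborel" and w0: "\<And>y. 0 \<le> w y" and wi: "integrable lborel w"
    and bx: "\<And>y. (\<integral>\<^sup>+x. ennreal (F x y) \<partial>lborel) \<le> ennreal (b y)"
    and b0: "\<And>y. 0 \<le> b y"
    and bi: "integrable lborel (\<lambda>y. w y * b y)"
  shows "integrable lborel (\<lambda>x. LINT y|lborel. F x y * w y)"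
    and "(LINT x|lborel. LINT y|lborel. F x y * w y) \<le> (LINT y|lborel. w y * b y)"
proof -
  have Fi: "integrable lborel (\<lambda>y. F x y * w y)" for x
  proof (rule Bochner_Integration.integrable_bound[OF wi])
    show "(\<lambda>y. F x y * w y) \<in> borel_measurable lborel" by measurable
    show "AE y in lborel. norm (F x y * w y) \<le> norm (w y)"
      using F01 w0 by (auto intro!: AE_I2 simp: abs_mult mult_left_le_one_le)
  qed
  have hm[measurable]: "(\<lambda>x. LINT y|lborel. F x y * w y) \<in> borel_measurable lborel"
    by measurable
  have h0: "0 \<le> (LINT y|lborel. F x y * w y)" for x
    using F01 w0 by (auto intro!: integral_nonneg_AE AE_I2)
  have "(\<integral>\<^sup>+x. ennreal (LINT y|lborel. F x y * w y) \<partial>lborel)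
      = (\<integral>\<^sup>+x. (\<integral>\<^sup>+y. ennreal (F x y * w y) \<partial>lborel) \<partial>lborel)"
    by (rule nn_integral_cong, rule nn_integral_eq_integral[symmetric, OF Fi]) (use F01 w0 in \<open>auto intro!: AE_I2\<close>)
  also have "\<dots> = (\<integral>\<^sup>+y. (\<integral>\<^sup>+x. ennreal (F x y * w y) \<partial>lborel) \<partial>lborel)"
    by (rule lborel_pair.Fubini'[symmetric]) measurable
  also have "\<dots> = (\<integral>\<^sup>+y. ennreal (w y) * (\<integral>\<^sup>+x. ennreal (F x y) \<partial>lborel) \<partial>lborel)"
    by (rule nn_integral_cong) (simp add: ennreal_mult'' F01 w0 nn_integral_cmult mult.commute)
  also have "\<dots> \<le> (\<integral>\<^sup>+y. ennreal (w y * b y) \<partial>lborel)"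
    by (rule nn_integral_mono) (metis bx ennreal_mult'' b0 mult.commute mult_left_mono zero_le)
  also have "\<dots> = ennreal (LINT y|lborel. w y * b y)"
    by (rule nn_integral_eq_integral[OF bi]) (use w0 b0 in auto)
  finally have le: "(\<integral>\<^sup>+x. ennreal (LINT y|lborel. F x y * w y) \<partial>lborel) \<le> ennreal (LINT y|lborel. w y * b y)" .
  show hi: "integrable lborel (\<lambda>x. LINT y|lborel. F x y * w y)"
    by (rule integrableI_nonneg) (use le h0 in \<open>auto intro!: AE_I2 simp: top.not_eq_extremum le_less_trans\<close>)
  have "ennreal (LINT x|lborel. LINT y|lborel. F x y * w y) = (\<integral>\<^sup>+x. ennreal (LINT y|lborel. F x y * w y) \<partial>lborel)"
    by (rule nn_integral_eq_integral[symmetric, OF hi]) (use h0 in auto)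
  with le have "ennreal (LINT x|lborel. LINT y|lborel. F x y * w y) \<le> ennreal (LINT y|lborel. w y * b y)" by simp
  thus "(LINT x|lborel. LINT y|lborel. F x y * w y) \<le> (LINT y|lborel. w y * b y)"
  proof -
    have "0 \<le> (LINT y|lborel. w y * b y)" by (rule integral_nonneg_AE) (simp add: w0 b0)
    thus ?thesis using \<open>ennreal _ \<le> ennreal _\<close> by (simp add: ennreal_le_iff2) linarith
  qed
qed


lemma emeasure_translate:
  fixes A :: "'a::euclidean_space set"
  assumes "A \<in> sets borel"
  shows "emeasure lborel ((\<lambda>y. x + y) -` A) = emeasure lborel A"
proof -
  have "emeasure (distr lborel borel ((+) x)) A = emeasure lborel ((+) x -` A \<inter> space lborel)"
    by (rule emeasure_distr) (use assms in auto)
  thus ?thesis by (simp add: lborel_distr_plus)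
qed

lemma nn_integral_translate_indicator:
  fixes A :: "'a::euclidean_space set"
  assumes "A \<in> sets borel"
  shows "(\<integral>\<^sup>+y. ennreal (indicator A (x + y)) \<partial>lborel) = emeasure lborel A"
proof -
  have "(\<integral>\<^sup>+y. ennreal (indicator A (x + y)) \<partial>lborel) = (\<integral>\<^sup>+y. indicator ((\<lambda>y. x + y) -` A) y \<partial>lborel)"
    by (rule nn_integral_cong) (simp split: split_indicator)
  also have "\<dots> = emeasure lborel ((\<lambda>y. x + y) -` A)"
  proof (rule nn_integral_indicator)
    have "(+) x \<in> borel \<rightarrow>\<^sub>M borel" by measurable
    from measurable_sets[OF this assms] show "(\<lambda>y. x + y) -` A \<in> sets lborel" by simp
  qed
  finally show ?thesis using emeasure_translate[OF assms] by simp
qed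

lemma lborel_distr_uminus_eu: "distr lborel borel uminus = (lborel :: 'a::euclidean_space measure)"
  using lborel_affine[of "-1 :: real" "0 :: 'a"] by (simp add: density_1)

lemma integral_uminus_eq:
  fixes f :: "'a::euclidean_space \<Rightarrow> real"
  assumes [measurable]: "f \<in> borel_measurable borel"
  shows "(LINT y|lborel. f (- y)) = (LINT y|lborel. f y)"
proof -
  have "(LINT y|lborel. f y) = integral\<^sup>L (distr lborel borel uminus) f"
    by (simp add: lborel_distr_uminus_eu)
  also have "\<dots> = (LINT y|lborel. f (- y))"
    by (rule integral_distr) auto
  finally show ?thesis ..
qed

locale kernel =
  fixes a :: "'a::euclidean_space \<Rightarrow> real"
  assumes a_meas: "a \<in> borel_measurable lborel"
    and a_nonneg: "\<And>y. a y \<ge> 0"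
    and a_even: "\<And>y. a (- y) = a y"
    and a_int: "integrable lborel a"
    and a_norm: "(LINT y|lborel. a y) = 1"
begin

lemma a_borel[measurable]: "a \<in> borel_measurable borel"
  using a_meas by simp

lemma int_bounded:
  fixes \<psi> :: "'a \<Rightarrow> complex"
  assumes [measurable]: "\<psi> \<in> borel_measurable borel" and b: "\<And>y. cmod (\<psi> y) \<le> B"
  shows "integrable lborel (\<lambda>y. \<psi> y * complex_of_real (a y))"
proof (rule Bochner_Integration.integrable_bound)
  show "integrable lborel (\<lambda>y. B * a y)" using a_int by simp
  show "(\<lambda>y. \<psi> y * complex_of_real (a y)) \<in> borel_measurable lborel" by measurable
  show "AE y in lborel. norm (\<psi> y * complex_of_real (a y)) \<le> norm (B * a y)"
  proof (rule AE_I2)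
    fix y :: 'a
    have "norm (\<psi> y * complex_of_real (a y)) = cmod (\<psi> y) * a y" using a_nonneg[of y] by (simp add: norm_mult)
    also have "\<dots> \<le> B * a y" using b[of y] a_nonneg[of y] by (rule mult_right_mono)
    also have "\<dots> \<le> norm (B * a y)" by simp
    finally show "norm (\<psi> y * complex_of_real (a y)) \<le> norm (B * a y)" .
  qed
qed

lemma Lop_eq:
  fixes \<psi> :: "'a \<Rightarrow> complex"
  assumes [measurable]: "\<psi> \<in> borel_measurable borel" and b: "\<And>y. cmod (\<psi> y) \<le> B"
  shows "Lop a \<psi> x = (LINT y|lborel. \<psi> (x + y) * complex_of_real (a y)) - \<psi> x"
proof -
  have i1: "integrable lborel (\<lambda>y. \<psi> (x + y) * complex_of_real (a y))"
    by (rule int_bounded[of _ B]) (auto simp: b)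
  have i2: "integrable lborel (\<lambda>y. \<psi> x * complex_of_real (a y))"
    by (rule int_bounded[of _ "cmod (\<psi> x)"]) auto
  have "Lop a \<psi> x = (LINT y|lborel. \<psi> (x + y) * complex_of_real (a y) - \<psi> x * complex_of_real (a y))"
    unfolding Lop_def by (simp add: algebra_simps)
  also have "\<dots> = (LINT y|lborel. \<psi> (x + y) * complex_of_real (a y)) - (LINT y|lborel. \<psi> x * complex_of_real (a y))"
    by (rule Bochner_Integration.integral_diff[OF i1 i2])
  also have "(LINT y|lborel. \<psi> x * complex_of_real (a y)) = \<psi> x"
    using a_norm by simp
  finally show ?thesis .
qed

lemma ahat_cis: "(LINT y|lborel. cis (k \<bullet> y) * complex_of_real (a y)) = complex_of_real (ahat a k)"
proof -
  have ic: "integrable lborel (\<lambda>y. cos (k \<bullet> y) * a y)"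
    by (rule Bochner_Integration.integrable_bound[OF a_int]) (auto intro!: AE_I2 simp: abs_mult a_nonneg mult_left_le_one_le)
  have isn: "integrable lborel (\<lambda>y. sin (k \<bullet> y) * a y)"
    by (rule Bochner_Integration.integrable_bound[OF a_int]) (auto intro!: AE_I2 simp: abs_mult a_nonneg mult_left_le_one_le)
  have s0: "(LINT y|lborel. sin (k \<bullet> y) * a y) = 0"
  proof -
    have "(LINT y|lborel. sin (k \<bullet> y) * a y) = (LINT y|lborel. sin (k \<bullet> (- y)) * a (- y))"
      by (rule integral_uminus_eq[symmetric]) measurable
    also have "\<dots> = - (LINT y|lborel. sin (k \<bullet> y) * a y)" by (simp add: a_even)
    finally show ?thesis by simp
  qed
  have eq: "(\<lambda>y. cis (k \<bullet> y) * complex_of_real (a y)) = (\<lambda>y. complex_of_real (cos (k \<bullet> y) * a y) + \<i> * complex_of_real (sin (k \<bullet> y) * a y))"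
    by (auto simp: cis.ctr Complex_eq algebra_simps)
  have j1: "integrable lborel (\<lambda>y. complex_of_real (cos (k \<bullet> y) * a y))" using ic by (rule integrable_of_real)
  have j2: "integrable lborel (\<lambda>y. \<i> * complex_of_real (sin (k \<bullet> y) * a y))"
    using isn by (intro integrable_mult_right integrable_of_real)
  have "(LINT y|lborel. cis (k \<bullet> y) * complex_of_real (a y)) =
      (LINT y|lborel. complex_of_real (cos (k \<bullet> y) * a y) + \<i> * complex_of_real (sin (k \<bullet> y) * a y))"
    by (simp only: eq)
  also have "\<dots> = (LINT y|lborel. complex_of_real (cos (k \<bullet> y) * a y)) + (LINT y|lborel. \<i> * complex_of_real (sin (k \<bullet> y) * a y))"
    by (rule Bochner_Integration.integral_add[OF j1 j2])
  also have "\<dots> = complex_of_real (ahat a k)"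
    by (simp only: integral_mult_right_zero integral_complex_of_real s0 ahat_def) simp
  finally show ?thesis .
qed

end


lemma pow_diff_bound:
  fixes R t :: real
  assumes t: "0 \<le> t" "t \<le> R"
  shows "(R + t) ^ n - (R - t) ^ n \<le> 2 * t * (real n * (2 * R) ^ (n - 1))"
proof -
  have trm: "(R - t) ^ (n - Suc i) * (R + t) ^ i \<le> (2 * R) ^ (n - 1)" if "i < n" for i
  proof -
    have "(R - t) ^ (n - Suc i) * (R + t) ^ i \<le> (2 * R) ^ (n - Suc i) * (2 * R) ^ i"
    proof (rule mult_mono)
      show "(R - t) ^ (n - Suc i) \<le> (2 * R) ^ (n - Suc i)" by (rule power_mono) (use t in auto)
      show "(R + t) ^ i \<le> (2 * R) ^ i" by (rule power_mono) (use t in auto)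
    qed (use t in auto)
    also have "\<dots> = (2 * R) ^ (n - Suc i + i)" by (simp only: power_add)
    also have "n - Suc i + i = n - 1" using that by simp
    finally show ?thesis .
  qed
  have "(R + t) ^ n - (R - t) ^ n = ((R + t) - (R - t)) * (\<Sum>i<n. (R - t) ^ (n - Suc i) * (R + t) ^ i)"
    by (rule power_diff_sumr2)
  also have "\<dots> \<le> ((R + t) - (R - t)) * (\<Sum>i<n. (2 * R) ^ (n - 1))"
  proof (rule mult_left_mono)
    show "(\<Sum>i<n. (R - t) ^ (n - Suc i) * (R + t) ^ i) \<le> (\<Sum>i<n. (2 * R) ^ (n - 1))"
      by (rule sum_mono) (use trm in simp)
  qed (use t in simp)
  also have "\<dots> = 2 * t * (real n * (2 * R) ^ (n - 1))" by simp
  finally show ?thesis .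
qed

lemma symdiff_ball_measure:
  fixes c y :: "'a::euclidean_space" and R :: real
  assumes R: "R > 0"
  defines "S \<equiv> {x. (x + y \<in> ball c R) \<noteq> (x \<in> ball c R)}"
  shows "S \<in> sets borel"
    and "emeasure lborel S \<le> ennreal (unit_ball_vol DIM('a) * R ^ DIM('a) * min 2 (real DIM('a) * 2 ^ DIM('a) * norm y / R))"
proof -
  let ?d = "DIM('a)" and ?V = "unit_ball_vol DIM('a)"
  define D where "D = real DIM('a) * 2 ^ DIM('a)"
  have tr[measurable]: "(\<lambda>x. x + y) \<in> borel \<rightarrow>\<^sub>M borel" by measurable
  have P: "(\<lambda>x. x + y) -` ball c R \<in> sets borel"
    using measurable_sets[OF tr, of "ball c R"] by simp
  have Seq: "S = (ball c R - (\<lambda>x. x + y) -` ball c R) \<union> ((\<lambda>x. x + y) -` ball c R - ball c R)"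
    unfolding S_def by auto
  show Sm: "S \<in> sets borel" unfolding Seq using P by auto
  have mB: "emeasure lborel (ball c R) = ennreal (?V * R ^ ?d)"
    using R by (simp add: emeasure_ball)
  have mP: "emeasure lborel ((\<lambda>x. x + y) -` ball c R) = ennreal (?V * R ^ ?d)"
    using emeasure_translate[of "ball c R" y] mB by (simp add: add.commute)
  have b1: "emeasure lborel S \<le> ennreal (?V * R ^ ?d * 2)"
  proof -
    have "emeasure lborel S \<le> emeasure lborel (ball c R \<union> (\<lambda>x. x + y) -` ball c R)"
      by (rule emeasure_mono) (use P in \<open>auto simp: S_def\<close>)
    also have "\<dots> \<le> emeasure lborel (ball c R) + emeasure lborel ((\<lambda>x. x + y) -` ball c R)"
      by (rule emeasure_subadditive) (use P in auto)
    also have "\<dots> = ennreal (?V * R ^ ?d * 2)" unfolding mB mP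
    proof -
      have nn: "0 \<le> ?V * R ^ ?d" using R by simp
      have "ennreal (?V * R ^ ?d + ?V * R ^ ?d) = ennreal (?V * R ^ ?d) + ennreal (?V * R ^ ?d)"
        by (rule ennreal_plus[OF nn nn])
      thus "ennreal (?V * R ^ ?d) + ennreal (?V * R ^ ?d) = ennreal (?V * R ^ ?d * 2)"
        by (simp add: mult_2_right)
    qed
    finally show ?thesis .
  qed
  have b2: "emeasure lborel S \<le> ennreal (?V * R ^ ?d * (D * norm y / R))"
  proof (cases "norm y \<le> R")
    case True
    have sub: "S \<subseteq> cball c (R + norm y) - ball c (R - norm y)"
    proof
      fix x assume "x \<in> S"
      have t1: "dist c (x + y) \<le> dist c x + norm y"
        using dist_triangle[of c "x + y" x] by (simp add: dist_norm)
      have t2: "dist c x \<le> dist c (x + y) + norm y"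
        using dist_triangle[of c x "x + y"] by (simp add: dist_norm)
      show "x \<in> cball c (R + norm y) - ball c (R - norm y)"
        using \<open>x \<in> S\<close> t1 t2 unfolding S_def by auto
    qed
    have "emeasure lborel S \<le> emeasure lborel (cball c (R + norm y) - ball c (R - norm y))"
      by (rule emeasure_mono[OF sub]) simp
    also have "\<dots> = emeasure lborel (cball c (R + norm y)) - emeasure lborel (ball c (R - norm y))"
    proof (rule emeasure_Diff)
      show "emeasure lborel (ball c (R - norm y)) \<noteq> \<infinity>"
        using emeasure_lborel_ball_finite[of c "R - norm y"] by simp
      show "ball c (R - norm y) \<subseteq> cball c (R + norm y)"
        using norm_ge_zero[of y] by (smt (verit) mem_ball mem_cball subsetI)
    qed auto
    also have "\<dots> = ennreal (?V * (R + norm y) ^ ?d) - ennreal (?V * (R - norm y) ^ ?d)"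
      using True R by (simp add: emeasure_ball emeasure_cball)
    also have "\<dots> = ennreal (?V * (R + norm y) ^ ?d - ?V * (R - norm y) ^ ?d)"
      by (rule ennreal_minus) (use True in simp)
    also have "\<dots> \<le> ennreal (?V * R ^ ?d * (D * norm y / R))"
    proof (rule ennreal_leI)
      have "(R + norm y) ^ ?d - (R - norm y) ^ ?d \<le> 2 * norm y * (real ?d * (2 * R) ^ (?d - 1))"
        by (rule pow_diff_bound) (use True in auto)
      also have "\<dots> = R ^ ?d * (D * norm y / R)"
      proof -
        have "R ^ ?d = R * R ^ (?d - 1)" using R by (simp flip: power_Suc)
        moreover have "(2::real) ^ ?d = 2 * 2 ^ (?d - 1)" by (simp flip: power_Suc)
        ultimately show ?thesis using R unfolding D_def by (simp add: power_mult_distrib field_simps)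
      qed
      finally have "(R + norm y) ^ ?d - (R - norm y) ^ ?d \<le> R ^ ?d * (D * norm y / R)" .
      hence "?V * ((R + norm y) ^ ?d - (R - norm y) ^ ?d) \<le> ?V * (R ^ ?d * (D * norm y / R))"
        by (rule mult_left_mono) simp
      thus "?V * (R + norm y) ^ ?d - ?V * (R - norm y) ^ ?d \<le> ?V * R ^ ?d * (D * norm y / R)"
        by (simp add: algebra_simps)
    qed
    finally show ?thesis .
  next
    case False
    have "D \<ge> 2"
    proof -
      have "real DIM('a) \<ge> 1" using DIM_positive[where 'a='a] by linarith
      moreover have "(2::real) ^ DIM('a) \<ge> 2 ^ 1"
        by (rule power_increasing) (use DIM_positive[where 'a='a] in auto)
      ultimately have "1 * 2 \<le> real DIM('a) * 2 ^ DIM('a)"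
        by (intro mult_mono) auto
      thus ?thesis unfolding D_def by simp
    qed
    moreover have "norm y / R \<ge> 1" using False R by simp
    ultimately have "2 * 1 \<le> D * (norm y / R)" by (intro mult_mono) auto
    hence "D * norm y / R \<ge> 2" by simp
    hence "?V * R ^ ?d * 2 \<le> ?V * R ^ ?d * (D * norm y / R)"
      using R by (intro mult_left_mono) auto
    thus ?thesis using b1 by (meson ennreal_leI order_trans)
  qed
  show "emeasure lborel S \<le> ennreal (?V * R ^ ?d * min 2 (real DIM('a) * 2 ^ DIM('a) * norm y / R))"
    using b1 b2 unfolding D_def by (cases "2 \<le> real DIM('a) * 2 ^ DIM('a) * norm y / R") (simp_all add: min_def)
qed


lemma (in kernel) tail_lim:
  assumes D: "D \<ge> 0"
  shows "(\<lambda>n. LINT y|lborel. a y * min 2 (D * norm y / real (Suc n))) \<longlonglongrightarrow> 0"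
proof -
  have m1: "(\<lambda>y. 0::real) \<in> borel_measurable lborel" by simp
  have m2: "(\<lambda>y. a y * min 2 (D * norm y / real (Suc n))) \<in> borel_measurable lborel" for n by measurable
  have i: "integrable lborel (\<lambda>y. 2 * a y)" using a_int by simp
  have lim: "AE y in lborel. (\<lambda>n. a y * min 2 (D * norm y / real (Suc n))) \<longlonglongrightarrow> 0"
  proof (rule AE_I2)
    fix y :: 'a
    have "(\<lambda>n. D * norm y / real (Suc n)) \<longlonglongrightarrow> 0"
      using LIMSEQ_Suc[OF lim_const_over_n[of "D * norm y"]] by simp
    hence "(\<lambda>n. min 2 (D * norm y / real (Suc n))) \<longlonglongrightarrow> min 2 0"
      by (intro tendsto_min tendsto_const)
    hence "(\<lambda>n. a y * min 2 (D * norm y / real (Suc n))) \<longlonglongrightarrow> a y * min 2 0"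
      by (intro tendsto_mult tendsto_const)
    thus "(\<lambda>n. a y * min 2 (D * norm y / real (Suc n))) \<longlonglongrightarrow> 0" by simp
  qed
  have bound: "AE y in lborel. norm (a y * min 2 (D * norm y / real (Suc n))) \<le> 2 * a y" for n
  proof (rule AE_I2)
    fix y :: 'a
    have "0 \<le> min 2 (D * norm y / real (Suc n))" using D by simp
    moreover have "min 2 (D * norm y / real (Suc n)) \<le> 2" by simp
    moreover have "a y * min 2 (D * norm y / real (Suc n)) \<le> a y * 2"
      by (rule mult_left_mono) (simp_all add: a_nonneg)
    ultimately show "norm (a y * min 2 (D * norm y / real (Suc n))) \<le> 2 * a y"
      using a_nonneg[of y] by (simp add: abs_mult)
  qed
  have "(\<lambda>n. LINT y|lborel. a y * min 2 (D * norm y / real (Suc n))) \<longlonglongrightarrow> (LINT y|lborel. (0::real))"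
    using Bochner_Integration.integral_dominated_convergence[OF m1 m2 i lim bound] by simp
  thus ?thesis by simp
qed

lemma (in kernel) cut_lim:
  "(\<lambda>n. LINT y|lborel. a y - min (a y) (real n)) \<longlonglongrightarrow> 0"
proof -
  have m1: "(\<lambda>y. 0::real) \<in> borel_measurable lborel" by simp
  have m2: "(\<lambda>y. a y - min (a y) (real n)) \<in> borel_measurable lborel" for n by measurable
  have lim: "AE y in lborel. (\<lambda>n. a y - min (a y) (real n)) \<longlonglongrightarrow> 0"
  proof (rule AE_I2)
    fix y :: 'a
    have "\<forall>\<^sub>F n in sequentially. a y - min (a y) (real n) = 0"
      unfolding eventually_sequentially
    proof (intro exI allI impI)
      fix n assume "nat \<lceil>a y\<rceil> \<le> n"
      hence "a y \<le> real n" by linarith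
      thus "a y - min (a y) (real n) = 0" by simp
    qed
    thus "(\<lambda>n. a y - min (a y) (real n)) \<longlonglongrightarrow> 0" by (rule tendsto_eventually)
  qed
  have bound: "AE y in lborel. norm (a y - min (a y) (real n)) \<le> a y" for n
    by (rule AE_I2) (use a_nonneg in auto)
  have "(\<lambda>n. LINT y|lborel. a y - min (a y) (real n)) \<longlonglongrightarrow> (LINT y|lborel. (0::real))"
    using Bochner_Integration.integral_dominated_convergence[OF m1 m2 a_int lim bound] by simp
  thus ?thesis by simp
qed

locale setting = kernel a for a :: "'a::euclidean_space \<Rightarrow> real" +
  fixes v :: "'a \<Rightarrow> real"
  assumes v_cont: "continuous_on UNIV v"
    and v_nonneg: "\<And>x. v x \<ge> 0"
    and v_supp: "compact (closure {x. v x \<noteq> 0})"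
begin

lemma v_borel[measurable]: "v \<in> borel_measurable borel"
  using v_cont by (rule borel_measurable_continuous_onI)

lemma v_bounded_supp: "\<exists>\<rho>\<ge>0. \<forall>x. v x \<noteq> 0 \<longrightarrow> norm x \<le> \<rho>"
proof -
  have "bounded (closure {x. v x \<noteq> 0})" using v_supp by (rule compact_imp_bounded)
  then obtain \<rho> where \<rho>: "\<And>x. x \<in> closure {x. v x \<noteq> 0} \<Longrightarrow> norm x \<le> \<rho>"
    unfolding bounded_iff by blast
  have "\<forall>x. v x \<noteq> 0 \<longrightarrow> norm x \<le> max \<rho> 0"
  proof (intro allI impI)
    fix x assume "v x \<noteq> 0"
    hence "x \<in> closure {x. v x \<noteq> 0}" using closure_subset[of "{x. v x \<noteq> 0}"] by (simp add: subset_iff)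
    hence "norm x \<le> \<rho>" by (rule \<rho>)
    thus "norm x \<le> max \<rho> 0" by simp
  qed
  moreover have "max \<rho> 0 \<ge> 0" by simp
  ultimately show ?thesis by blast
qed

lemma part1: "approx_ev (Hop a v) (complex_of_real (ahat a k - 1))"
  unfolding approx_ev_def
proof (intro allI impI)
  fix e :: real assume e: "e > 0"
  define D where "D = real DIM('a) * 2 ^ DIM('a)"
  have D0: "D \<ge> 0" unfolding D_def by simp
  from tail_lim[OF D0] e obtain n where n: "(LINT y|lborel. a y * min 2 (D * norm y / real (Suc n))) < e"
  proof -
    from LIMSEQ_D[OF tail_lim[OF D0] e] obtain no where
      "\<forall>n\<ge>no. norm ((LINT y|lborel. a y * min 2 (D * norm y / real (Suc n))) - 0) < e" by blast
    hence "(LINT y|lborel. a y * min 2 (D * norm y / real (Suc no))) < e" by auto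
    thus ?thesis by (rule that)
  qed
  define R where "R = real (Suc n)"
  have R: "R > 0" unfolding R_def by simp
  obtain \<rho> where \<rho>: "\<rho> \<ge> 0" "\<And>x. v x \<noteq> 0 \<Longrightarrow> norm x \<le> \<rho>" using v_bounded_supp by blast
  obtain b0 :: 'a where b0: "b0 \<in> Basis" using nonempty_Basis by blast
  define c where "c = (R + \<rho> + 1) *\<^sub>R b0"
  have nc: "norm c = R + \<rho> + 1"
  proof -
    have "norm c = \<bar>R + \<rho> + 1\<bar> * norm b0" unfolding c_def by (rule norm_scaleR)
    also have "norm b0 = 1" using b0 by (rule norm_Basis)
    finally show ?thesis using R \<rho> by simp
  qed
  define B where "B = ball c R"
  have vB: "v x = 0" if "x \<in> B" for x
  proof (rule ccontr)
    assume "v x \<noteq> 0"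
    hence "norm x \<le> \<rho>" by (rule \<rho>(2))
    moreover have "dist c x < R" using that unfolding B_def by simp
    moreover have "norm c \<le> norm x + dist c x"
      using norm_triangle_sub[of c x] by (simp add: dist_norm)
    ultimately show False using nc by linarith
  qed
  define \<psi> where "\<psi> = (\<lambda>x. cis (k \<bullet> x) * complex_of_real (indicator B x))"
  have Bm[measurable]: "B \<in> sets borel" unfolding B_def by simp
  have cism[measurable]: "(\<lambda>x. cis (k \<bullet> x)) \<in> borel_measurable borel"
    by (intro borel_measurable_continuous_onI continuous_intros)
  have ind_eq: "(\<lambda>x. complex_of_real (indicator B x)) = indicator B"
    by (auto simp: fun_eq_iff split: split_indicator)
  have \<psi>m[measurable]: "\<psi> \<in> borel_measurable borel" unfolding \<psi>_def ind_eq by measurable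
  have n\<psi>: "cmod (\<psi> x) = indicator B x" for x unfolding \<psi>_def by (simp add: norm_mult)
  have \<psi>b: "cmod (\<psi> x) \<le> 1" for x unfolding n\<psi> by (simp split: split_indicator)
  have mB: "measure lborel B = unit_ball_vol DIM('a) * R ^ DIM('a)"
    unfolding B_def using R by (simp add: content_ball)
  have eB: "emeasure lborel B < \<infinity>" unfolding B_def by (rule emeasure_lborel_ball_finite)
  have sq\<psi>: "(cmod (\<psi> x))\<^sup>2 = indicator B x" for x unfolding n\<psi> by (simp split: split_indicator)
  have L2\<psi>: "L2 \<psi>" unfolding L2_def sq\<psi> using eB by (auto simp: integrable_indicator_iff)
  have N2\<psi>: "N2 \<psi> = unit_ball_vol DIM('a) * R ^ DIM('a)" unfolding N2_def sq\<psi> using mB by simp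
  have N2pos: "N2 \<psi> > 0" unfolding N2\<psi> using R by simp
  define lam where "lam = complex_of_real (ahat a k - 1)"
  define F where "F = (\<lambda>x y. \<bar>indicator B (x + y) - indicator B x\<bar> :: real)"
  have Fm[measurable]: "case_prod F \<in> borel_measurable (lborel \<Otimes>\<^sub>M lborel)" unfolding F_def by measurable
  have F01: "0 \<le> F x y \<and> F x y \<le> 1" for x y unfolding F_def by (auto split: split_indicator)
  define h where "h = (\<lambda>x. LINT y|lborel. F x y * a y)"
  have geq: "Hop a v \<psi> x - lam * \<psi> x = (LINT y|lborel. cis (k \<bullet> (x + y)) * complex_of_real ((indicator B (x + y) - indicator B x) * a y))" for x
  proof -
    have v\<psi>: "complex_of_real (v x) * \<psi> x = 0" using vB unfolding \<psi>_def by (cases "x \<in> B") auto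
    have i1: "integrable lborel (\<lambda>y. \<psi> (x + y) * complex_of_real (a y))"
      by (rule int_bounded[of _ 1]) (auto simp: \<psi>b)
    have i2: "integrable lborel (\<lambda>y. (\<psi> x * cis (k \<bullet> y)) * complex_of_real (a y))"
      by (rule int_bounded[of _ 1]) (auto simp: norm_mult \<psi>b)
    have "Hop a v \<psi> x - lam * \<psi> x = (LINT y|lborel. \<psi> (x + y) * complex_of_real (a y)) - \<psi> x - lam * \<psi> x"
      using Lop_eq[OF \<psi>m \<psi>b, of x] v\<psi> unfolding Hop_def by simp
    also have "\<dots> = (LINT y|lborel. \<psi> (x + y) * complex_of_real (a y)) - complex_of_real (ahat a k) * \<psi> x"
      unfolding lam_def by (simp add: algebra_simps)
    also have "complex_of_real (ahat a k) * \<psi> x = (LINT y|lborel. (\<psi> x * cis (k \<bullet> y)) * complex_of_real (a y))"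
    proof -
      have "(LINT y|lborel. (\<psi> x * cis (k \<bullet> y)) * complex_of_real (a y)) = \<psi> x * (LINT y|lborel. cis (k \<bullet> y) * complex_of_real (a y))"
        by (simp add: mult.assoc)
      also have "\<dots> = \<psi> x * complex_of_real (ahat a k)" by (simp only: ahat_cis)
      finally show ?thesis by (simp only: mult.commute)
    qed
    also have "(LINT y|lborel. \<psi> (x + y) * complex_of_real (a y)) - (LINT y|lborel. (\<psi> x * cis (k \<bullet> y)) * complex_of_real (a y))
        = (LINT y|lborel. \<psi> (x + y) * complex_of_real (a y) - (\<psi> x * cis (k \<bullet> y)) * complex_of_real (a y))"
      by (rule Bochner_Integration.integral_diff[OF i1 i2, symmetric])
    also have "\<dots> = (LINT y|lborel. cis (k \<bullet> (x + y)) * complex_of_real ((indicator B (x + y) - indicator B x) * a y))"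
    proof (rule Bochner_Integration.integral_cong[OF refl])
      fix y
      have "cis (k \<bullet> x) * cis (k \<bullet> y) = cis (k \<bullet> (x + y))" by (simp add: cis_mult inner_add_right)
      thus "\<psi> (x + y) * complex_of_real (a y) - (\<psi> x * cis (k \<bullet> y)) * complex_of_real (a y) =
          cis (k \<bullet> (x + y)) * complex_of_real ((indicator B (x + y) - indicator B x) * a y)"
        unfolding \<psi>_def by (simp add: algebra_simps)
    qed
    finally show ?thesis .
  qed
  have gnorm: "cmod (Hop a v \<psi> x - lam * \<psi> x) \<le> h x" for x
  proof -
    have "cmod (Hop a v \<psi> x - lam * \<psi> x) \<le> (LINT y|lborel. cmod (cis (k \<bullet> (x + y)) * complex_of_real ((indicator B (x + y) - indicator B x) * a y)))"
      unfolding geq by (rule integral_norm_bound)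
    also have "(\<lambda>y. cmod (cis (k \<bullet> (x + y)) * complex_of_real ((indicator B (x + y) - indicator B x) * a y))) = (\<lambda>y. F x y * a y)"
      by (auto simp: fun_eq_iff norm_mult abs_mult F_def a_nonneg simp del: of_real_mult of_real_diff)
    finally show ?thesis unfolding h_def .
  qed
  have Fai: "integrable lborel (\<lambda>y. F x y * a y)" for x
    by (rule Bochner_Integration.integrable_bound[OF a_int]) (use F01 a_nonneg in \<open>auto intro!: AE_I2 simp: abs_mult mult_left_le_one_le\<close>)
  have h01: "0 \<le> h x \<and> h x \<le> 1" for x
  proof
    show "0 \<le> h x" unfolding h_def using F01 a_nonneg by (auto intro!: integral_nonneg_AE AE_I2)
    have "h x \<le> (LINT y|lborel. a y)" unfolding h_def
      by (rule integral_mono[OF Fai a_int]) (use F01 a_nonneg in \<open>simp add: mult_left_le_one_le\<close>)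
    thus "h x \<le> 1" using a_norm by simp
  qed
  define b where "b = (\<lambda>y::'a. unit_ball_vol DIM('a) * R ^ DIM('a) * min 2 (D * norm y / R))"
  have b0: "0 \<le> b y" for y unfolding b_def using R D0 by simp
  have bx: "(\<integral>\<^sup>+x. ennreal (F x y) \<partial>lborel) \<le> ennreal (b y)" for y
  proof -
    define S where "S = {x. (x + y \<in> ball c R) \<noteq> (x \<in> ball c R)}"
    have "(\<lambda>x. ennreal (F x y)) = indicator S"
      by (auto simp: fun_eq_iff F_def S_def B_def split: split_indicator)
    moreover have "S \<in> sets lborel" using symdiff_ball_measure(1)[OF R, of y c] unfolding S_def by simp
    ultimately have "(\<integral>\<^sup>+x. ennreal (F x y) \<partial>lborel) = emeasure lborel S" by simp
    also have "\<dots> \<le> ennreal (b y)"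
      using symdiff_ball_measure(2)[OF R, of y c] unfolding S_def b_def D_def by simp
    finally show ?thesis .
  qed
  have ti: "integrable lborel (\<lambda>y. a y * min 2 (D * norm y / R))"
  proof (rule Bochner_Integration.integrable_bound)
    show "integrable lborel (\<lambda>y. 2 * a y)" using a_int by simp
    show "(\<lambda>y. a y * min 2 (D * norm y / R)) \<in> borel_measurable lborel" by measurable
    show "AE y in lborel. norm (a y * min 2 (D * norm y / R)) \<le> norm (2 * a y)"
    proof (rule AE_I2)
      fix y :: 'a
      have "0 \<le> min 2 (D * norm y / R)" using D0 R by simp
      moreover have "a y * min 2 (D * norm y / R) \<le> a y * 2"
        by (rule mult_left_mono) (simp_all add: a_nonneg)
      ultimately show "norm (a y * min 2 (D * norm y / R)) \<le> norm (2 * a y)"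
        using a_nonneg[of y] by (simp add: abs_mult)
    qed
  qed
  have bi: "integrable lborel (\<lambda>y. a y * b y)"
  proof -
    have "(\<lambda>y. a y * b y) = (\<lambda>y. (unit_ball_vol DIM('a) * R ^ DIM('a)) * (a y * min 2 (D * norm y / R)))"
      unfolding b_def by (auto simp: fun_eq_iff algebra_simps)
    thus ?thesis using ti by simp
  qed
  note TB = tonelli_bound[OF Fm F01 a_meas a_nonneg a_int bx b0 bi]
  have hi: "integrable lborel h" using TB(1) unfolding h_def .
  have "(LINT x|lborel. h x) \<le> (LINT y|lborel. a y * b y)" using TB(2) unfolding h_def .
  also have "(LINT y|lborel. a y * b y) = (unit_ball_vol DIM('a) * R ^ DIM('a)) * (LINT y|lborel. a y * min 2 (D * norm y / R))"
  proof -
    have "(\<lambda>y. a y * b y) = (\<lambda>y. (unit_ball_vol DIM('a) * R ^ DIM('a)) * (a y * min 2 (D * norm y / R)))"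
      unfolding b_def by (auto simp: fun_eq_iff algebra_simps)
    thus ?thesis by simp
  qed
  also have "\<dots> \<le> (unit_ball_vol DIM('a) * R ^ DIM('a)) * e"
    using n R unfolding R_def by (intro mult_left_mono) auto
  finally have hint: "(LINT x|lborel. h x) \<le> e * N2 \<psi>" unfolding N2\<psi> by (simp add: mult.commute)
  define g where "g = (\<lambda>x. Hop a v \<psi> x - lam * \<psi> x)"
  have gm[measurable]: "g \<in> borel_measurable lborel" unfolding g_def Hop_def Lop_def by measurable
  have gsq: "(cmod (g x))\<^sup>2 \<le> h x" for x
  proof -
    have "cmod (g x) \<le> h x" unfolding g_def by (rule gnorm)
    hence "(cmod (g x))\<^sup>2 \<le> (h x)\<^sup>2" by (rule power_mono) simp
    also have "\<dots> \<le> h x" using h01[of x] by (simp add: power2_eq_square mult_left_le_one_le)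
    finally show ?thesis .
  qed
  have gi: "integrable lborel (\<lambda>x. (cmod (g x))\<^sup>2)"
    by (rule Bochner_Integration.integrable_bound[OF hi]) (use gsq h01 in \<open>auto intro!: AE_I2\<close>)
  have L2g: "L2 g" unfolding L2_def using gm gi by simp
  have "N2 g \<le> (LINT x|lborel. h x)" unfolding N2_def by (rule integral_mono[OF gi hi gsq])
  with hint have "N2 g \<le> e * N2 \<psi>" by simp
  thus "\<exists>\<psi>. L2 \<psi> \<and> L2 (\<lambda>x. Hop a v \<psi> x - complex_of_real (ahat a k - 1) * \<psi> x) \<and> 0 < N2 \<psi> \<and>
      N2 (\<lambda>x. Hop a v \<psi> x - complex_of_real (ahat a k - 1) * \<psi> x) \<le> e * N2 \<psi>"
    using L2\<psi> L2g N2pos unfolding g_def lam_def by blast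
qed

end


lemma integral_translate_indicator:
  fixes A :: "'a::euclidean_space set"
  assumes "A \<in> sets borel"
  shows "(LINT y|lborel. indicator A (x + y)) = measure lborel A"
proof -
  have tr: "(+) x \<in> borel \<rightarrow>\<^sub>M borel" by measurable
  have P: "(\<lambda>y. x + y) -` A \<in> sets lborel" using measurable_sets[OF tr assms] by simp
  have "(LINT y|lborel. indicator A (x + y)) = (LINT y|lborel. indicator ((\<lambda>y. x + y) -` A) y)"
    by (rule Bochner_Integration.integral_cong) (auto split: split_indicator)
  also have "\<dots> = measure lborel ((\<lambda>y. x + y) -` A)" using P by simp
  also have "\<dots> = measure lborel A" unfolding measure_def using emeasure_translate[OF assms] by simp
  finally show ?thesis .
qed

lemma integrable_translate_indicator:
  fixes A :: "'a::euclidean_space set"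
  assumes "A \<in> sets borel" "emeasure lborel A < \<infinity>"
  shows "integrable lborel (\<lambda>y. indicator A (x + y) :: real)"
proof -
  have tr: "(+) x \<in> borel \<rightarrow>\<^sub>M borel" by measurable
  have P: "(\<lambda>y. x + y) -` A \<in> sets lborel" using measurable_sets[OF tr assms(1)] by simp
  have "(\<lambda>y. indicator A (x + y) :: real) = indicator ((\<lambda>y. x + y) -` A)"
    by (auto simp: fun_eq_iff split: split_indicator)
  moreover have "integrable lborel (indicator ((\<lambda>y. x + y) -` A) :: 'a \<Rightarrow> real)"
    using P emeasure_translate[OF assms(1), of x] assms(2) by (simp add: integrable_indicator_iff)
  ultimately show ?thesis by simp
qed

context setting
begin

lemma part2: "approx_ev (Hop a v) (complex_of_real (v x0 - 1))"
  unfolding approx_ev_def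
proof (intro allI impI)
  fix e :: real assume e: "e > 0"
  define \<eta> where "\<eta> = min 1 (e / 9)"
  have \<eta>: "\<eta> > 0" "\<eta> \<le> 1" "\<eta> \<le> e / 9" unfolding \<eta>_def using e by auto
  obtain n where n: "(LINT y|lborel. a y - min (a y) (real n)) < \<eta>"
  proof -
    from LIMSEQ_D[OF cut_lim \<eta>(1)] obtain no where
      "\<forall>n\<ge>no. norm ((LINT y|lborel. a y - min (a y) (real n)) - 0) < \<eta>" by blast
    hence "(LINT y|lborel. a y - min (a y) (real no)) < \<eta>" by auto
    thus ?thesis by (rule that)
  qed
  define M where "M = real n"
  define bm where "bm = (\<lambda>y. min (a y) M)"
  define cc where "cc = (\<lambda>y. a y - min (a y) M)"
  define \<gamma> where "\<gamma> = (LINT y|lborel. cc y)"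
  have M0: "M \<ge> 0" unfolding M_def by simp
  have bm0: "0 \<le> bm y" "bm y \<le> M" "bm y \<le> a y" for y unfolding bm_def using a_nonneg[of y] M0 by auto
  have cc0: "0 \<le> cc y" "cc y \<le> a y" for y unfolding cc_def using a_nonneg[of y] M0 by auto
  have bmm[measurable]: "bm \<in> borel_measurable lborel" unfolding bm_def by measurable
  have ccm[measurable]: "cc \<in> borel_measurable lborel" unfolding cc_def by measurable
  have bmi: "integrable lborel bm"
    by (rule Bochner_Integration.integrable_bound[OF a_int bmm]) (use bm0 a_nonneg in \<open>auto intro!: AE_I2\<close>)
  have cci: "integrable lborel cc"
    by (rule Bochner_Integration.integrable_bound[OF a_int ccm]) (use cc0 a_nonneg in \<open>auto intro!: AE_I2\<close>)
  have \<gamma>0: "0 \<le> \<gamma>" unfolding \<gamma>_def using cc0 by (auto intro!: integral_nonneg_AE AE_I2)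
  have \<gamma>1: "\<gamma> < \<eta>" using n unfolding \<gamma>_def cc_def M_def .
  have \<gamma>sq: "\<gamma> * \<gamma> \<le> e / 9"
  proof -
    have "\<gamma> * \<gamma> \<le> \<gamma> * 1" using \<gamma>0 \<gamma>1 \<eta> by (intro mult_left_mono) auto
    thus ?thesis using \<gamma>1 \<eta> by argo
  qed
  have bmint: "(LINT y|lborel. bm y) \<le> 1"
  proof -
    have "(LINT y|lborel. bm y) \<le> (LINT y|lborel. a y)" by (rule integral_mono[OF bmi a_int]) (use bm0 in simp)
    thus ?thesis using a_norm by simp
  qed
  have "isCont v x0" using v_cont by (simp add: continuous_on_eq_continuous_at)
  moreover have "sqrt (e / 9) > 0" using e by simp
  ultimately obtain r0 where r0: "r0 > 0" "\<And>x. dist x x0 < r0 \<Longrightarrow> dist (v x) (v x0) < sqrt (e / 9)"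
    unfolding continuous_at_eps_delta by blast
  define V where "V = unit_ball_vol DIM('a)"
  have V: "V > 0" unfolding V_def by simp
  define r where "r = min (min r0 1) (e / (9 * (M * V + 1)))"
  have MV: "M * V \<ge> 0" unfolding M_def using V by simp
  have r: "r > 0" "r \<le> r0" "r \<le> 1" "r \<le> e / (9 * (M * V + 1))" unfolding r_def using r0 e MV by auto
  define m where "m = V * r ^ DIM('a)"
  have m: "m > 0" unfolding m_def using V r by simp
  have Mm: "M * m \<le> e / 9"
  proof -
    have "r ^ DIM('a) \<le> r ^ 1" by (rule power_decreasing) (use r in auto)
    hence "M * m \<le> M * V * r" unfolding m_def using MV V M_def by (simp add: mult_left_mono mult.assoc)
    also have "\<dots> \<le> M * V * (e / (9 * (M * V + 1)))" using r MV by (intro mult_left_mono) auto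
    also have "\<dots> \<le> e / 9" using MV e by (simp add: field_simps)
    finally show ?thesis .
  qed
  define Q where "Q = ball x0 r"
  have Qm[measurable]: "Q \<in> sets borel" unfolding Q_def by simp
  have mQ: "measure lborel Q = m" unfolding Q_def m_def V_def using r by (simp add: content_ball)
  have eQ: "emeasure lborel Q = ennreal m" unfolding Q_def m_def V_def using r by (simp add: emeasure_ball)
  have vQ: "(v x - v x0)\<^sup>2 \<le> e / 9" if "x \<in> Q" for x
  proof -
    have "\<bar>v x - v x0\<bar> < sqrt (e / 9)" using r0(2)[of x] that r unfolding Q_def by (simp add: dist_real_def dist_commute)
    hence "\<bar>v x - v x0\<bar>\<^sup>2 \<le> (sqrt (e / 9))\<^sup>2" by (intro power_mono) auto
    thus ?thesis using e by simp
  qed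
  define \<psi> :: "'a \<Rightarrow> complex" where "\<psi> = indicator Q"
  have \<psi>m[measurable]: "\<psi> \<in> borel_measurable borel" unfolding \<psi>_def by measurable
  have \<psi>b: "cmod (\<psi> x) \<le> 1" for x unfolding \<psi>_def by (simp split: split_indicator)
  have sq\<psi>: "(cmod (\<psi> x))\<^sup>2 = indicator Q x" for x unfolding \<psi>_def by (simp split: split_indicator)
  have L2\<psi>: "L2 \<psi>" unfolding L2_def sq\<psi> using eQ by (auto simp: integrable_indicator_iff)
  have N2\<psi>: "N2 \<psi> = m" unfolding N2_def sq\<psi> using mQ by simp
  define F where "F = (\<lambda>x y. indicator Q (x + y) :: real)"
  have Fm[measurable]: "case_prod F \<in> borel_measurable (lborel \<Otimes>\<^sub>M lborel)" unfolding F_def by measurable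
  have F01: "0 \<le> F x y \<and> F x y \<le> 1" for x y unfolding F_def by (auto split: split_indicator)
  define Fb where "Fb = (\<lambda>x. LINT y|lborel. F x y * bm y)"
  define Fc where "Fc = (\<lambda>x. LINT y|lborel. F x y * cc y)"
  have Fbi: "integrable lborel (\<lambda>y. F x y * bm y)" for x
    by (rule Bochner_Integration.integrable_bound[OF bmi]) (use F01 bm0 in \<open>auto intro!: AE_I2 simp: abs_mult mult_left_le_one_le\<close>)
  have Fci: "integrable lborel (\<lambda>y. F x y * cc y)" for x
    by (rule Bochner_Integration.integrable_bound[OF cci]) (use F01 cc0 in \<open>auto intro!: AE_I2 simp: abs_mult mult_left_le_one_le\<close>)
  have Fb0: "0 \<le> Fb x" for x unfolding Fb_def using F01 bm0 by (auto intro!: integral_nonneg_AE AE_I2)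
  have Fc0: "0 \<le> Fc x" for x unfolding Fc_def using F01 cc0 by (auto intro!: integral_nonneg_AE AE_I2)
  have FbM: "Fb x \<le> M * m" for x
  proof -
    have ii: "integrable lborel (\<lambda>y. F x y * M)"
      unfolding F_def using integrable_translate_indicator[OF Qm, of x] eQ by simp
    have "Fb x \<le> (LINT y|lborel. F x y * M)" unfolding Fb_def
      by (rule integral_mono[OF Fbi ii]) (use F01 bm0 in \<open>simp add: mult_left_mono\<close>)
    also have "\<dots> = M * m" unfolding F_def using integral_translate_indicator[OF Qm, of x] mQ by simp
    finally show ?thesis .
  qed
  have Fc\<gamma>: "Fc x \<le> \<gamma>" for x
    unfolding Fc_def \<gamma>_def by (rule integral_mono[OF Fci cci]) (use F01 cc0 in \<open>simp add: mult_left_le_one_le\<close>)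
  have bx: "(\<integral>\<^sup>+x. ennreal (F x y) \<partial>lborel) \<le> ennreal m" for y
  proof -
    have "(\<integral>\<^sup>+x. ennreal (F x y) \<partial>lborel) = (\<integral>\<^sup>+x. ennreal (indicator Q (y + x)) \<partial>lborel)"
      unfolding F_def by (simp add: add.commute)
    also have "\<dots> = ennreal m" using nn_integral_translate_indicator[OF Qm, of y] eQ by simp
    finally show ?thesis by simp
  qed
  have m0: "0 \<le> m" using m by simp
  have bmi': "integrable lborel (\<lambda>y. bm y * m)" using bmi by simp
  have cci': "integrable lborel (\<lambda>y. cc y * m)" using cci by simp
  note TBb = tonelli_bound[OF Fm F01 bmm bm0(1) bmi bx m0 bmi']
  note TBc = tonelli_bound[OF Fm F01 ccm cc0(1) cci bx m0 cci']
  have Fbint: "integrable lborel Fb" using TBb(1) unfolding Fb_def .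
  have Fcint: "integrable lborel Fc" using TBc(1) unfolding Fc_def .
  have intFb: "(LINT x|lborel. Fb x) \<le> m"
  proof -
    have "(LINT x|lborel. Fb x) \<le> (LINT y|lborel. bm y * m)" using TBb(2) unfolding Fb_def .
    also have "\<dots> = (LINT y|lborel. bm y) * m" by simp
    also have "\<dots> \<le> 1 * m" using bmint m0 by (rule mult_right_mono)
    finally show ?thesis by simp
  qed
  have intFc: "(LINT x|lborel. Fc x) \<le> \<gamma> * m"
  proof -
    have "(LINT x|lborel. Fc x) \<le> (LINT y|lborel. cc y * m)" using TBc(2) unfolding Fc_def .
    also have "\<dots> = \<gamma> * m" unfolding \<gamma>_def by simp
    finally show ?thesis .
  qed
  define lam where "lam = complex_of_real (v x0 - 1)"
  define w where "w = (\<lambda>x. (v x - v x0) * indicator Q x)"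
  have geq: "Hop a v \<psi> x - lam * \<psi> x = complex_of_real (Fb x + Fc x + w x)" for x
  proof -
    have "(LINT y|lborel. \<psi> (x + y) * complex_of_real (a y)) = (LINT y|lborel. complex_of_real (F x y * a y))"
      by (rule Bochner_Integration.integral_cong) (auto simp: \<psi>_def F_def split: split_indicator)
    also have "\<dots> = complex_of_real (LINT y|lborel. F x y * a y)" by (rule integral_complex_of_real)
    also have "(LINT y|lborel. F x y * a y) = (LINT y|lborel. F x y * bm y + F x y * cc y)"
      by (rule Bochner_Integration.integral_cong) (auto simp: bm_def cc_def algebra_simps)
    also have "\<dots> = Fb x + Fc x" unfolding Fb_def Fc_def by (rule Bochner_Integration.integral_add[OF Fbi Fci])
    finally have I: "(LINT y|lborel. \<psi> (x + y) * complex_of_real (a y)) = complex_of_real (Fb x + Fc x)" .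
    have "Hop a v \<psi> x - lam * \<psi> x = complex_of_real (Fb x + Fc x) - \<psi> x + complex_of_real (v x) * \<psi> x - lam * \<psi> x"
      unfolding Hop_def Lop_eq[OF \<psi>m \<psi>b, of x] I by simp
    also have "\<dots> = complex_of_real (Fb x + Fc x + w x)"
      unfolding lam_def w_def \<psi>_def by (simp add: algebra_simps split: split_indicator)
    finally show ?thesis .
  qed
  have sq3: "(p + q + t)\<^sup>2 \<le> 3 * (p\<^sup>2 + q\<^sup>2 + t\<^sup>2)" for p q t :: real
  proof -
    have "(p + q + t)\<^sup>2 = p\<^sup>2 + q\<^sup>2 + t\<^sup>2 + 2 * (p * q) + 2 * (q * t) + 2 * (p * t)"
      by (simp add: power2_eq_square algebra_simps)
    moreover have "0 \<le> (p - q)\<^sup>2" "0 \<le> (q - t)\<^sup>2" "0 \<le> (p - t)\<^sup>2" by simp_all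
    moreover have "(p - q)\<^sup>2 = p\<^sup>2 + q\<^sup>2 - 2 * (p * q)" "(q - t)\<^sup>2 = q\<^sup>2 + t\<^sup>2 - 2 * (q * t)"
      "(p - t)\<^sup>2 = p\<^sup>2 + t\<^sup>2 - 2 * (p * t)"
      by (simp_all add: power2_eq_square algebra_simps)
    ultimately show ?thesis by argo
  qed
  define G where "G = (\<lambda>x. 3 * (M * m * Fb x + \<gamma> * Fc x + (e / 9) * indicator Q x))"
  have Gi: "integrable lborel G" unfolding G_def using Fbint Fcint eQ
    by (auto intro!: Bochner_Integration.integrable_add integrable_mult_right simp: integrable_indicator_iff)
  define g where "g = (\<lambda>x. Hop a v \<psi> x - lam * \<psi> x)"
  have gm[measurable]: "g \<in> borel_measurable lborel" unfolding g_def Hop_def Lop_def by measurable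
  have gsq: "(cmod (g x))\<^sup>2 \<le> G x" for x
  proof -
    have "(cmod (g x))\<^sup>2 = (Fb x + Fc x + w x)\<^sup>2" unfolding g_def geq norm_of_real by simp
    also have "\<dots> \<le> 3 * ((Fb x)\<^sup>2 + (Fc x)\<^sup>2 + (w x)\<^sup>2)" by (rule sq3)
    also have "\<dots> \<le> G x" unfolding G_def
    proof -
      have "(Fb x)\<^sup>2 \<le> M * m * Fb x" unfolding power2_eq_square using FbM[of x] Fb0[of x] by (rule mult_right_mono)
      moreover have "(Fc x)\<^sup>2 \<le> \<gamma> * Fc x" unfolding power2_eq_square using Fc\<gamma>[of x] Fc0[of x] by (rule mult_right_mono)
      moreover have "(w x)\<^sup>2 \<le> (e / 9) * indicator Q x" unfolding w_def using vQ[of x] by (auto split: split_indicator)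
      ultimately show "3 * ((Fb x)\<^sup>2 + (Fc x)\<^sup>2 + (w x)\<^sup>2) \<le> 3 * (M * m * Fb x + \<gamma> * Fc x + (e / 9) * indicator Q x)"
        by argo
    qed
    finally show ?thesis .
  qed
  have G0: "0 \<le> G x" for x using gsq[of x] by (smt (verit) zero_le_power2)
  have gi: "integrable lborel (\<lambda>x. (cmod (g x))\<^sup>2)"
    by (rule Bochner_Integration.integrable_bound[OF Gi]) (use gsq G0 in \<open>auto intro!: AE_I2\<close>)
  have L2g: "L2 g" unfolding L2_def using gm gi by simp
  have "N2 g \<le> (LINT x|lborel. G x)" unfolding N2_def by (rule integral_mono[OF gi Gi gsq])
  also have "(LINT x|lborel. G x) = 3 * (M * m * (LINT x|lborel. Fb x) + \<gamma> * (LINT x|lborel. Fc x) + (e / 9) * m)"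
    unfolding G_def using Fbint Fcint eQ mQ
    by (simp add: Bochner_Integration.integral_add integrable_indicator_iff)
  also have "\<dots> \<le> 3 * (M * m * m + \<gamma> * (\<gamma> * m) + (e / 9) * m)"
  proof -
    have "M * m * (LINT x|lborel. Fb x) \<le> M * m * m" using intFb M0 m0 by (intro mult_left_mono) auto
    moreover have "\<gamma> * (LINT x|lborel. Fc x) \<le> \<gamma> * (\<gamma> * m)" using intFc \<gamma>0 by (intro mult_left_mono) auto
    ultimately show ?thesis by argo
  qed
  also have "\<dots> \<le> 3 * ((e / 9) * m + (e / 9) * m + (e / 9) * m)"
  proof -
    have "M * m * m \<le> (e / 9) * m" using Mm m0 by (rule mult_right_mono)
    moreover have "\<gamma> * (\<gamma> * m) \<le> (e / 9) * m" using mult_right_mono[OF \<gamma>sq m0] by (simp add: mult.assoc)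
    ultimately show ?thesis by argo
  qed
  also have "\<dots> = e * N2 \<psi>" unfolding N2\<psi> by simp
  finally have "N2 g \<le> e * N2 \<psi>" .
  thus "\<exists>\<psi>. L2 \<psi> \<and> L2 (\<lambda>x. Hop a v \<psi> x - complex_of_real (v x0 - 1) * \<psi> x) \<and> 0 < N2 \<psi> \<and>
      N2 (\<lambda>x. Hop a v \<psi> x - complex_of_real (v x0 - 1) * \<psi> x) \<le> e * N2 \<psi>"
    using L2\<psi> L2g N2\<psi> m unfolding g_def lam_def by auto
qed

end

lemma (in kernel) ahat_cont: "continuous_on UNIV (ahat a)"
proof -
  have "continuous (at k) (ahat a)" for k
  proof (rule continuous_at_sequentiallyI)
    fix u assume u: "u \<longlonglongrightarrow> k"
    have m1: "(\<lambda>y. cos (k \<bullet> y) * a y) \<in> borel_measurable lborel" by measurable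
    have m2: "(\<lambda>y. cos (u n \<bullet> y) * a y) \<in> borel_measurable lborel" for n by measurable
    have lim: "AE y in lborel. (\<lambda>n. cos (u n \<bullet> y) * a y) \<longlonglongrightarrow> cos (k \<bullet> y) * a y"
      by (rule AE_I2) (intro tendsto_intros u)
    have bound: "AE y in lborel. norm (cos (u n \<bullet> y) * a y) \<le> a y" for n
      by (rule AE_I2) (simp add: abs_mult a_nonneg mult_left_le_one_le)
    show "(\<lambda>n. ahat a (u n)) \<longlonglongrightarrow> ahat a k"
      unfolding ahat_def using Bochner_Integration.integral_dominated_convergence[OF m1 m2 a_int lim bound] by simp
  qed
  thus ?thesis by (simp add: continuous_at_imp_continuous_on)
qed

lemma (in kernel) ahat0: "ahat a 0 = 1"
  unfolding ahat_def using a_norm by simp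

lemma nonisolated:
  fixes p q t :: real
  assumes "p < q" "t \<in> {p..q}" "complex_of_real ` {p..q} \<subseteq> S" "e > 0"
  shows "\<exists>\<mu>\<in>S. \<mu> \<noteq> complex_of_real t \<and> dist \<mu> (complex_of_real t) < e"
proof -
  define \<delta> where "\<delta> = min (e / 2) ((q - p) / 2)"
  have \<delta>: "\<delta> > 0" "\<delta> < e" "\<delta> \<le> (q - p) / 2" unfolding \<delta>_def using assms by (auto simp: min_def)
  define s where "s = (if t + \<delta> \<le> q then t + \<delta> else t - \<delta>)"
  have "s \<in> {p..q}" using assms \<delta> unfolding s_def by auto
  hence "complex_of_real s \<in> S" using assms(3) by auto
  moreover have "\<bar>s - t\<bar> = \<delta>" unfolding s_def using \<delta> by auto
  hence "complex_of_real s \<noteq> complex_of_real t" "dist (complex_of_real s) (complex_of_real t) < e"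
    using \<delta> by (auto simp: dist_norm simp flip: of_real_diff)
  ultimately show ?thesis by blast
qed

lemma conn_int:
  fixes W :: "real set"
  assumes "connected W" "x \<in> W" "y \<in> W" "x \<le> z" "z \<le> y"
  shows "z \<in> W"
  using assms unfolding connected_iff_interval by blast

context setting
begin

lemma main:
  assumes ahat_lim: "(ahat a \<longlongrightarrow> 0) at_infinity"
  shows "complex_of_real ` closure (range (\<lambda>k. ahat a k - 1)) \<subseteq> essential_spectrum (Hop a v)
       \<and> complex_of_real ` {-1 .. (SUP x. v x) - 1} \<subseteq> essential_spectrum (Hop a v)"
proof -
  define A where "A = {\<mu>. approx_ev (Hop a v) \<mu>}"
  have Acl: "closed A"
  proof -
    have "closure A \<subseteq> A" unfolding A_def using approx_ev_closed by blast
    thus ?thesis using closure_subset_eq by blast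
  qed
  have AS: "A \<subseteq> spectrum_op (Hop a v)" unfolding A_def using approx_ev_spectrum by blast
  define W where "W = closure (range (\<lambda>k. ahat a k - 1))"
  have WA: "complex_of_real ` W \<subseteq> A" unfolding W_def
  proof (rule image_closure_subset[OF _ Acl])
    show "continuous_on (closure (range (\<lambda>k. ahat a k - 1))) complex_of_real"
      by (intro continuous_intros)
    show "complex_of_real ` range (\<lambda>k. ahat a k - 1) \<subseteq> A" unfolding A_def using part1 by auto
  qed
  obtain \<rho> where \<rho>: "\<rho> \<ge> 0" "\<And>x. v x \<noteq> 0 \<Longrightarrow> norm x \<le> \<rho>" using v_bounded_supp by blast
  obtain b0 :: 'a where b0: "b0 \<in> Basis" using nonempty_Basis by blast
  have "connected (range v)" using v_cont connected_UNIV by (rule connected_continuous_image)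
  hence cv: "connected (closure (range v))" by (rule connected_imp_connected_closure)
  have v0: "0 \<in> range v"
  proof -
    have "norm ((\<rho> + 1) *\<^sub>R b0) = \<rho> + 1" using b0 \<rho> by simp
    hence "\<not> norm ((\<rho> + 1) *\<^sub>R b0) \<le> \<rho>" by simp
    hence "v ((\<rho> + 1) *\<^sub>R b0) = 0" using \<rho>(2) by blast
    moreover have "v ((\<rho> + 1) *\<^sub>R b0) \<in> range v" by (rule rangeI)
    ultimately show ?thesis by simp
  qed
  have bdd: "bdd_above (range v)"
  proof -
    have "compact (v ` cball 0 \<rho>)"
      by (rule compact_continuous_image) (use v_cont in \<open>auto intro: continuous_on_subset\<close>)
    hence "bounded (v ` cball 0 \<rho>)" by (rule compact_imp_bounded)
    then obtain Bd where Bd: "\<And>x. x \<in> cball 0 \<rho> \<Longrightarrow> norm (v x) \<le> Bd" unfolding bounded_iff by blast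
    have "v x \<le> max Bd 0" for x
    proof (cases "v x = 0")
      case False
      hence "x \<in> cball 0 \<rho>" using \<rho>(2) by simp
      thus ?thesis using Bd[of x] by simp
    qed simp
    thus ?thesis by (intro bdd_aboveI2) 
  qed
  have Sup_in: "(SUP x. v x) \<in> closure (range v)"
    by (rule closure_contains_Sup) (use bdd in auto)
  have Sup0: "(SUP x. v x) \<ge> 0" using cSup_upper[OF v0 bdd] by simp
  have U2: "complex_of_real ` {-1 .. (SUP x. v x) - 1} \<subseteq> A"
  proof -
    have "complex_of_real ` {-1 .. (SUP x. v x) - 1} \<subseteq> (\<lambda>s. complex_of_real (s - 1)) ` closure (range v)"
    proof
      fix z assume "z \<in> complex_of_real ` {-1 .. (SUP x. v x) - 1}"
      then obtain t where t: "t \<in> {-1 .. (SUP x. v x) - 1}" "z = complex_of_real t" by blast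
      have "0 \<in> closure (range v)" using v0 by (rule subsetD[OF closure_subset])
      moreover have "0 \<le> t + 1" "t + 1 \<le> (SUP x. v x)" using t(1) by auto
      ultimately have "t + 1 \<in> closure (range v)" using conn_int[OF cv _ Sup_in] by blast
      thus "z \<in> (\<lambda>s. complex_of_real (s - 1)) ` closure (range v)" using t(2) by (intro image_eqI[of _ _ "t + 1"]) auto
    qed
    also have "\<dots> \<subseteq> A"
    proof (rule image_closure_subset[OF _ Acl])
      show "continuous_on (closure (range v)) (\<lambda>s. complex_of_real (s - 1))" by (intro continuous_intros)
      show "(\<lambda>s. complex_of_real (s - 1)) ` range v \<subseteq> A" unfolding A_def using part2 by auto
    qed
    finally show ?thesis .
  qed
  have W0: "0 \<in> W"
  proof -
    have "ahat a 0 - 1 \<in> range (\<lambda>k. ahat a k - 1)" by (rule rangeI)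
    hence "0 \<in> range (\<lambda>k. ahat a k - 1)" using ahat0 by simp
    thus ?thesis unfolding W_def by (rule subsetD[OF closure_subset])
  qed
  have Wm1: "-1 \<in> W" unfolding W_def closure_sequential
  proof (intro exI conjI)
    show "\<forall>n. ahat a (real n *\<^sub>R b0) - 1 \<in> range (\<lambda>k. ahat a k - 1)" by auto
    have "filterlim (\<lambda>n. real n *\<^sub>R b0) at_infinity sequentially"
      by (rule filterlim_norm_at_top_imp_at_infinity) (use b0 in \<open>simp add: filterlim_real_sequentially\<close>)
    hence "((\<lambda>n. ahat a (real n *\<^sub>R b0)) \<longlongrightarrow> 0) sequentially"
      using ahat_lim by (rule filterlim_compose[rotated])
    hence "((\<lambda>n. ahat a (real n *\<^sub>R b0) - 1) \<longlongrightarrow> 0 - 1) sequentially"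
      by (intro tendsto_intros)
    thus "((\<lambda>n. ahat a (real n *\<^sub>R b0) - 1) \<longlongrightarrow> -1) sequentially" by simp
  qed
  have cW: "connected W" unfolding W_def
  proof (intro connected_imp_connected_closure connected_continuous_image connected_UNIV)
    show "continuous_on UNIV (\<lambda>k. ahat a k - 1)" by (intro continuous_on_diff ahat_cont continuous_on_const)
  qed
  define Sp where "Sp = spectrum_op (Hop a v)"
  have key: "complex_of_real t \<in> essential_spectrum (Hop a v)"
    if "p < q" "t \<in> {p..q}" "complex_of_real ` {p..q} \<subseteq> A" for p q t
  proof -
    have "complex_of_real t \<in> complex_of_real ` {p..q}" using that(2) by (rule imageI)
    hence tS: "complex_of_real t \<in> Sp" using that(3) AS unfolding Sp_def by blast
    have "complex_of_real t \<notin> discrete_spectrum (Hop a v)"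
    proof
      assume "complex_of_real t \<in> discrete_spectrum (Hop a v)"
      then obtain e where e: "e > 0" "\<And>\<mu>. \<mu> \<in> Sp \<Longrightarrow> \<mu> \<noteq> complex_of_real t \<Longrightarrow> e \<le> dist \<mu> (complex_of_real t)"
        unfolding discrete_spectrum_def Sp_def by blast
      have "complex_of_real ` {p..q} \<subseteq> Sp" using that(3) AS unfolding Sp_def by auto
      from nonisolated[OF that(1,2) this e(1)] obtain \<mu> where
        "\<mu> \<in> Sp" "\<mu> \<noteq> complex_of_real t" "dist \<mu> (complex_of_real t) < e" by blast
      with e(2)[of \<mu>] show False by simp
    qed
    thus ?thesis using tS unfolding essential_spectrum_def Sp_def by blast
  qed
  have part_W: "complex_of_real t \<in> essential_spectrum (Hop a v)" if "t \<in> W" for t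
  proof (rule key)
    show "min t (-1) < max t 0" by simp
    show "t \<in> {min t (-1) .. max t 0}" by simp
    have "{min t (-1) .. max t 0} \<subseteq> W"
    proof
      fix z assume z: "z \<in> {min t (-1) .. max t 0}"
      show "z \<in> W"
      proof (cases "z < -1")
        case True
        hence "t \<le> z" using z by (auto simp: min_def split: if_splits)
        thus ?thesis using conn_int[OF cW that Wm1] True by simp
      next
        case nlt: False
        show ?thesis
        proof (cases "z > 0")
          case True
          hence "z \<le> t" using z by (auto simp: max_def split: if_splits)
          thus ?thesis using conn_int[OF cW W0 that] True by simp
        next
          case False
          thus ?thesis using conn_int[OF cW Wm1 W0] nlt by simp
        qed
      qed
    qed
    thus "complex_of_real ` {min t (-1) .. max t 0} \<subseteq> A" using WA by auto
  qed
  have part_U2: "complex_of_real t \<in> essential_spectrum (Hop a v)" if "t \<in> {-1 .. (SUP x. v x) - 1}" for t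
  proof (rule key)
    show "-1 < max 0 ((SUP x. v x) - 1)" by simp
    show "t \<in> {-1 .. max 0 ((SUP x. v x) - 1)}" using that by auto
    have "{-1 .. max 0 ((SUP x. v x) - 1)} \<subseteq> W \<union> {-1 .. (SUP x. v x) - 1}"
    proof
      fix z assume z: "z \<in> {-1 .. max 0 ((SUP x. v x) - 1)}"
      show "z \<in> W \<union> {-1 .. (SUP x. v x) - 1}"
      proof (cases "z \<le> 0")
        case True
        hence "z \<in> W" using conn_int[OF cW Wm1 W0] z by simp
        thus ?thesis by simp
      next
        case False
        thus ?thesis using z by auto
      qed
    qed
    thus "complex_of_real ` {-1 .. max 0 ((SUP x. v x) - 1)} \<subseteq> A" using WA U2 by blast
  qed
  show ?thesis using part_W part_U2 unfolding W_def by auto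
qed

end

theorem mainTheorem2:
  fixes a :: "'a::euclidean_space \<Rightarrow> real" and v :: "'a \<Rightarrow> real"
  assumes a_meas: "a \<in> borel_measurable lborel"
    and a_nonneg: "\<And>y. a y \<ge> 0"
    and a_even: "\<And>y. a (- y) = a y"
    and a_int: "integrable lborel a"
    and a_norm: "(LINT y|lborel. a y) = 1"
    and ahat_lt: "\<And>k. k \<noteq> 0 \<Longrightarrow> \<bar>ahat a k\<bar> < 1"
    and ahat_lim: "(ahat a \<longlongrightarrow> 0) at_infinity"
    and ahat_L1: "integrable lborel (ahat a)"
    and v_cont: "continuous_on UNIV v"
    and v_nonneg: "\<And>x. v x \<ge> 0"
    and v_supp: "compact (closure {x. v x \<noteq> 0})"
  shows "complex_of_real ` closure (range (\<lambda>k. ahat a k - 1)) \<subseteq> essential_spectrum (Hop a v)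
       \<and> complex_of_real ` {-1 .. (SUP x. v x) - 1} \<subseteq> essential_spectrum (Hop a v)"
proof -
  interpret S: setting a v
    by unfold_locales (use a_meas a_nonneg a_even a_int a_norm v_cont v_nonneg v_supp in auto)
  show ?thesis using S.main[OF ahat_lim] .
qed

end
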